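(* Let $L\geq1$ be an integer, $P\geq 0$, $p_B\in[0,1]$. Let $\beta_1,\ldots,\beta_L$ be i.i.d. with $\mathbb{P}(\beta_l=0)=p_B$, $\mathbb{P}(\beta_l=1)=1-p_B$; let $\theta_1,\ldots,\theta_L$ be i.i.d. $\mathrm{Uniform}(0,2\pi)$; let $\{\phi_{l,k}\}_{l\in\{1,\ldots,L\},k\geq1}$ be i.i.d. $\mathrm{Uniform}(0,2\pi)$; all these families mutually independent. Let $\alpha=\sum_{l=1}^L\beta_l$, $h[k]:=\sum_{l=1}^L\beta_le^{j(\theta_l+\phi_{l,k})}$, and for integers $i\geq0$ $$\bar R(i):=\mathbb{E}\Big[\log\Big(1+\Big|\textstyle\sum_{l=1}^i e^{j\vartheta_l}\Big|^2P\Big)\Big],$$ where $\vartheta_1,\vartheta_2,\ldots$ are i.i.d. $\mathrm{Uniform}(0,2\pi)$. Then for every $\epsilon>0$, $$\lim_{K\to\infty}\mathbb{P}\Big(\Big|\frac1K\sum_{k=1}^K\log(1+|h[k]|^2P)-\bar R(\alpha)\Big|\geq\epsilon\Big)=0.$$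
   Context: This concerns non-coherent joint transmission with "phase diversity": each transmitter $l$ multiplies the $k$-th symbol of a frame of $K$ symbols by a random phase $e^{j\phi_{l,k}}$ known to all parties. $\log$ is the logarithm in a fixed base. *)

theory Defs
  imports "HOL-Probability.Probability"
begin

definition unif_2pi :: "real measure" where
  "unif_2pi = uniform_measure lborel {0..2*pi}"

definition Rbar :: "real \<Rightarrow> real \<Rightarrow> nat \<Rightarrow> real" where
  "Rbar b P i = (\<integral>v. log b (1 + (cmod (\<Sum>l=1..i. cis (v l)))\<^sup>2 * P)
                    \<partial>(PiM {1..i} (\<lambda>_. unif_2pi)))"

datatype rv_index = IBeta nat | ITheta nat | IPhi nat nat

end

theory Submission
  imports Defs
begin

lemma U_prob: "prob_space unif_2pi"
  unfolding unif_2pi_def by (rule prob_space_uniform_measure) auto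

lemma sets_U[simp, measurable_cong]: "sets unif_2pi = sets borel"
  by (simp add: unif_2pi_def)
lemma space_U[simp]: "space unif_2pi = UNIV"
  by (simp add: unif_2pi_def)

lemma U_density: "unif_2pi = density lborel (\<lambda>x. ennreal (indicator {0..2*pi} x / (2*pi)))"
proof -
  have "ennreal (1/(2*pi)) = ennreal 1 / ennreal (2*pi)" by (rule divide_ennreal[symmetric]) auto
  then have *: "1 / ennreal (2*pi) = ennreal (1/(2*pi))" by simp
  have "uniform_measure lborel {0..2*pi} = density lborel (\<lambda>x. ennreal (indicator {0..2*pi} x / (2*pi)))"
    unfolding uniform_measure_def
    by (intro density_cong) (auto simp: indicator_def * )
  then show ?thesis by (simp add: unif_2pi_def)
qed

lemma integral_U:
  fixes f :: "real \<Rightarrow> real"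
  assumes [measurable]: "f \<in> borel_measurable borel"
  shows "integral\<^sup>L unif_2pi f = (LBINT x=0..2*pi. f x) / (2*pi)"
proof -
  have "integral\<^sup>L unif_2pi f = (\<integral>x. (indicator {0..2*pi} x / (2*pi)) *\<^sub>R f x \<partial>lborel)"
    unfolding U_density by (subst integral_density) auto
  also have "\<dots> = (\<integral>x. indicator {0..2*pi} x *\<^sub>R f x \<partial>lborel) / (2*pi)"
    by (simp add: mult.commute)
  also have "\<dots> = (LBINT x=0..2*pi. f x) / (2*pi)"
    using interval_integral_Icc[of 0 "2*pi" f] by (simp add: set_lebesgue_integral_def zero_ereal_def)
  finally show ?thesis .
qed

lemma interval_integrable_bounded:
  fixes f :: "real \<Rightarrow> real"
  assumes [measurable]: "f \<in> borel_measurable borel" and bnd: "\<And>x. \<bar>f x\<bar> \<le> B"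
  shows "interval_lebesgue_integrable lborel (ereal a) (ereal b) f"
proof -
  have "set_integrable lborel {min a b<..<max a b} f"
    unfolding set_integrable_def
    by (rule integrableI_bounded_set_indicator[where B=B]) (auto simp: bnd)
  then show ?thesis unfolding interval_lebesgue_integrable_def
    by (auto simp: min_def max_def split: if_splits)
qed

lemma interval_shift:
  fixes f :: "real \<Rightarrow> real"
  assumes [measurable]: "f \<in> borel_measurable borel" and ab: "a \<le> b"
  shows "(LBINT x=ereal a..ereal b. f (d + x)) = (LBINT u=ereal (d+a)..ereal (d+b). f u)"
proof -
  have "(LBINT u=ereal (d+a)..ereal (d+b). f u) = (LBINT u. indicator {d+a..d+b} u * f u)"
    using interval_integral_Icc[of "d+a" "d+b" f] ab by (simp add: set_lebesgue_integral_def)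
  also have "\<dots> = (LBINT x. indicator {d+a..d+b} (d + 1*x) * f (d + 1*x))"
    using lborel_integral_real_affine[of 1 "\<lambda>u. indicator {d+a..d+b} u * f u" d] by simp
  also have "\<dots> = (LBINT x. indicator {a..b} x * f (d+x))"
    by (intro Bochner_Integration.integral_cong) (auto simp: indicator_def)
  also have "\<dots> = (LBINT x=ereal a..ereal b. f (d + x))"
    using interval_integral_Icc[of a b "\<lambda>x. f (d+x)"] ab by (simp add: set_lebesgue_integral_def)
  finally show ?thesis ..
qed

lemma periodic_shift:
  fixes f :: "real \<Rightarrow> real"
  assumes [measurable]: "f \<in> borel_measurable borel" and bnd: "\<And>x. \<bar>f x\<bar> \<le> B"
    and per: "\<And>x. f (x + 2*pi) = f x" and c: "0 \<le> c" "c \<le> 2*pi"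
  shows "(LBINT x=ereal 0..ereal (2*pi). f (c + x)) = (LBINT x=ereal 0..ereal (2*pi). f x)"
proof -
  have I: "interval_lebesgue_integrable lborel (ereal a) (ereal b) f" for a b
    by (rule interval_integrable_bounded[OF assms(1) bnd])
  have "(LBINT x=ereal 0..ereal (2*pi). f (c + x)) = (LBINT u=ereal c..ereal (c+2*pi). f u)"
    using interval_shift[of f 0 "2*pi" c] by simp
  also have "\<dots> = (LBINT u=ereal c..ereal (2*pi). f u) + (LBINT u=ereal (2*pi)..ereal (2*pi+c). f u)"
    using interval_integral_sum[of "ereal c" "ereal (2*pi)" "ereal (c+2*pi)" f] I c
    by (simp add: add.commute min_def max_def)
  also have "(LBINT u=ereal (2*pi)..ereal (2*pi+c). f u) = (LBINT x=ereal 0..ereal c. f (2*pi + x))"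
    using interval_shift[of f 0 c "2*pi"] c by simp
  also have "\<dots> = (LBINT x=ereal 0..ereal c. f x)"
    using per by (simp add: add.commute)
  also have "(LBINT u=ereal c..ereal (2*pi). f u) + (LBINT x=ereal 0..ereal c. f x)
      = (LBINT x=ereal 0..ereal c. f x) + (LBINT u=ereal c..ereal (2*pi). f u)" by simp
  also have "\<dots> = (LBINT x=ereal 0..ereal (2*pi). f x)"
    using interval_integral_sum[of "ereal 0" "ereal c" "ereal (2*pi)" f] I c
    by (simp add: min_def max_def)
  finally show ?thesis .
qed

definition sm :: "real \<Rightarrow> real" where
  "sm x = x - 2*pi * real_of_int \<lfloor>x / (2*pi)\<rfloor>"

lemma sm_measurable[measurable]: "sm \<in> borel_measurable borel"
  unfolding sm_def by measurable

lemma sm_int: "sm (x + 2*pi*real_of_int n) = sm x"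
proof -
  have "(x + 2*pi*real_of_int n) / (2*pi) = x/(2*pi) + real_of_int n"
    by (simp add: field_simps)
  then show ?thesis unfolding sm_def by (simp add: algebra_simps)
qed

lemma sm_period: "sm (x + 2*pi) = sm x"
  using sm_int[of x 1] by simp

lemma sm_id: "0 \<le> x \<Longrightarrow> x < 2*pi \<Longrightarrow> sm x = x"
proof -
  assume "0 \<le> x" "x < 2*pi"
  then have "\<lfloor>x/(2*pi)\<rfloor> = 0"
    by (intro floor_unique) (auto simp: field_simps)
  then show ?thesis by (simp add: sm_def)
qed

lemma sm_range: "0 \<le> sm x" "sm x < 2*pi"
proof -
  have a: "real_of_int \<lfloor>x/(2*pi)\<rfloor> \<le> x/(2*pi)" "x/(2*pi) < real_of_int \<lfloor>x/(2*pi)\<rfloor> + 1"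
    by linarith+
  have q: "2*pi*(x/(2*pi)) = x" by simp
  have "2*pi*real_of_int \<lfloor>x/(2*pi)\<rfloor> \<le> 2*pi*(x/(2*pi))" by (intro mult_left_mono a) auto
  moreover have "2*pi*(x/(2*pi)) < 2*pi*(real_of_int \<lfloor>x/(2*pi)\<rfloor> + 1)"
    by (intro mult_strict_left_mono a) auto
  ultimately show "0 \<le> sm x" "sm x < 2*pi" unfolding sm_def q
    by (auto simp: algebra_simps)
qed

lemma sm_decomp: "x = sm x + 2*pi*real_of_int \<lfloor>x/(2*pi)\<rfloor>"
  by (simp add: sm_def)

lemma cis_sm: "cis (sm x) = cis x"
proof -
  have "cis x = cis (sm x + 2*pi*real_of_int \<lfloor>x/(2*pi)\<rfloor>)"
    by (simp add: sm_def)
  also have "\<dots> = cis (sm x) * cis (2*pi*real_of_int \<lfloor>x/(2*pi)\<rfloor>)"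
    by (rule cis_mult[symmetric])
  also have "cis (2*pi*real_of_int \<lfloor>x/(2*pi)\<rfloor>) = 1"
    by (rule cis_multiple_2pi) simp
  finally show ?thesis by simp
qed

lemma sm_add: "sm (c + v) = sm (sm c + v)"
proof -
  have "c + v = (sm c + v) + 2*pi*real_of_int \<lfloor>c/(2*pi)\<rfloor>"
    using sm_decomp[of c] by simp
  then show ?thesis using sm_int by metis
qed

lemma AE_U_sm: "AE v in unif_2pi. sm v = v"
proof -
  have "AE v in lborel. v \<in> {0..2*pi} \<longrightarrow> sm v = v"
    using AE_lborel_singleton[of "2*pi"]
    by eventually_elim (auto intro!: sm_id)
  then show ?thesis unfolding unif_2pi_def
    by (subst AE_uniform_measure) auto
qed

lemma U_shift_distr: "distr unif_2pi unif_2pi (\<lambda>v. sm (c + v)) = unif_2pi"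
proof (rule measure_eqI)
  interpret U: prob_space unif_2pi by (rule U_prob)
  show "sets (distr unif_2pi unif_2pi (\<lambda>v. sm (c + v))) = sets unif_2pi" by simp
  fix A assume "A \<in> sets (distr unif_2pi unif_2pi (\<lambda>v. sm (c + v)))"
  then have A[measurable]: "A \<in> sets borel" by simp
  define F where "F = (\<lambda>x. indicator A (sm x) :: real)"
  have F[measurable]: "F \<in> borel_measurable borel" unfolding F_def by measurable
  have c': "0 \<le> sm c" "sm c \<le> 2*pi" using sm_range[of c] by auto
  have "emeasure (distr unif_2pi unif_2pi (\<lambda>v. sm (c + v))) A = emeasure unif_2pi ((\<lambda>v. sm (c + v)) -` A)"
    by (subst emeasure_distr) auto
  also have "\<dots> = ennreal (\<integral>v. indicator ((\<lambda>v. sm (c + v)) -` A) v \<partial>unif_2pi)"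
    by (simp add: U.emeasure_eq_measure)
  also have "(\<integral>v. indicator ((\<lambda>v. sm (c + v)) -` A) v \<partial>unif_2pi) = (\<integral>v. F (sm c + v) \<partial>unif_2pi)"
    by (intro Bochner_Integration.integral_cong) (auto simp: F_def indicator_def sm_add[of c])
  also have "\<dots> = (LBINT x=ereal 0..ereal (2*pi). F (sm c + x)) / (2*pi)"
    by (subst integral_U) (auto simp: zero_ereal_def)
  also have "\<dots> = (LBINT x=ereal 0..ereal (2*pi). F x) / (2*pi)"
    by (subst periodic_shift[where B=1]) (auto simp: c' F_def sm_period indicator_def)
  also have "\<dots> = (\<integral>v. F v \<partial>unif_2pi)"
    by (subst integral_U) (auto simp: zero_ereal_def)
  also have "\<dots> = (\<integral>v. indicator A v \<partial>unif_2pi)"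
    by (intro integral_cong_AE) (auto simp: F_def intro: AE_mp[OF AE_U_sm])
  also have "ennreal \<dots> = emeasure unif_2pi A"
    by (simp add: U.emeasure_eq_measure)
  finally show "emeasure (distr unif_2pi unif_2pi (\<lambda>v. sm (c + v))) A = emeasure unif_2pi A" .
qed

lemma cis_meas[measurable]: "cis \<in> borel_measurable borel"
  by (intro borel_measurable_continuous_onI continuous_intros)

lemma PiM_shift:
  assumes fin: "finite I"
  shows "distr (PiM I (\<lambda>_. unif_2pi)) (PiM I (\<lambda>_. unif_2pi)) (\<lambda>y. \<lambda>i\<in>I. sm (c i + y i))
       = PiM I (\<lambda>_. unif_2pi)"
proof -
  interpret P: product_prob_space "\<lambda>_::'a. unif_2pi"
    by (intro product_prob_spaceI U_prob)
  have T[measurable]: "(\<lambda>y. \<lambda>i\<in>I. sm (c i + y i)) \<in> measurable (PiM I (\<lambda>_. unif_2pi)) (PiM I (\<lambda>_. unif_2pi))"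
    by (intro measurable_restrict) measurable
  show ?thesis
  proof (rule P.PiM_eqI[OF fin])
    show "sets (distr (PiM I (\<lambda>_. unif_2pi)) (PiM I (\<lambda>_. unif_2pi)) (\<lambda>y. \<lambda>i\<in>I. sm (c i + y i)))
        = sets (PiM I (\<lambda>_. unif_2pi))" by simp
    fix A assume A: "\<And>i. i \<in> I \<Longrightarrow> A i \<in> sets unif_2pi"
    have A'[measurable]: "i \<in> I \<Longrightarrow> A i \<in> sets borel" for i using A by simp
    have mi: "(\<lambda>v. sm (c i + v)) \<in> borel_measurable borel" for i by measurable
    have pre: "i \<in> I \<Longrightarrow> (\<lambda>v. sm (c i + v)) -` A i \<in> sets borel" for i
      by (rule measurable_sets_borel[OF mi A'])
    have "(\<lambda>y. \<lambda>i\<in>I. sm (c i + y i)) -` Pi\<^sub>E I A \<inter> space (PiM I (\<lambda>_. unif_2pi))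
        = Pi\<^sub>E I (\<lambda>i. (\<lambda>v. sm (c i + v)) -` A i)"
      by (auto simp: space_PiM PiE_iff)
    then have "emeasure (distr (PiM I (\<lambda>_. unif_2pi)) (PiM I (\<lambda>_. unif_2pi)) (\<lambda>y. \<lambda>i\<in>I. sm (c i + y i))) (Pi\<^sub>E I A)
       = emeasure (PiM I (\<lambda>_. unif_2pi)) (Pi\<^sub>E I (\<lambda>i. (\<lambda>v. sm (c i + v)) -` A i))"
      using A pre by (subst emeasure_distr) (auto intro!: sets_PiM_I_finite fin)
    also have "\<dots> = (\<Prod>i\<in>I. emeasure unif_2pi ((\<lambda>v. sm (c i + v)) -` A i))"
      using pre by (subst P.emeasure_PiM) (auto simp: fin)
    also have "\<dots> = (\<Prod>i\<in>I. emeasure unif_2pi (A i))"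
    proof (intro prod.cong refl)
      fix i assume i: "i \<in> I"
      have "emeasure unif_2pi ((\<lambda>v. sm (c i + v)) -` A i)
          = emeasure (distr unif_2pi unif_2pi (\<lambda>v. sm (c i + v))) (A i)"
        using i by (subst emeasure_distr) auto
      also have "\<dots> = emeasure unif_2pi (A i)" by (simp add: U_shift_distr)
      finally show "emeasure unif_2pi ((\<lambda>v. sm (c i + v)) -` A i) = emeasure unif_2pi (A i)" .
    qed
    finally show "emeasure (distr (PiM I (\<lambda>_. unif_2pi)) (PiM I (\<lambda>_. unif_2pi)) (\<lambda>y. \<lambda>i\<in>I. sm (c i + y i))) (Pi\<^sub>E I A)
       = (\<Prod>i\<in>I. emeasure unif_2pi (A i))" .
  qed
qed

lemma inner_integral:
  fixes t :: "nat \<Rightarrow> real"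
  assumes S: "S \<subseteq> {1..L}"
  shows "(\<integral>y. log b (1 + (cmod (\<Sum>l\<in>S. cis (t l + y (IPhi l k))))\<^sup>2 * P)
            \<partial>PiM ((\<lambda>l. IPhi l k) ` {1..L}) (\<lambda>_. unif_2pi)) = Rbar b P (card S)"
proof -
  define Ph where "Ph = (\<lambda>l. IPhi l k) ` {1..L}"
  define Q where "Q = PiM Ph (\<lambda>_. unif_2pi)"
  have finPh: "finite Ph" unfolding Ph_def by simp
  have finS: "finite S" using S finite_subset by blast
  have inPh: "l \<in> S \<Longrightarrow> IPhi l k \<in> Ph" for l using S unfolding Ph_def by auto
  define c where "c i = (case i of IPhi l _ \<Rightarrow> - t l | _ \<Rightarrow> 0)" for i
  define T where "T y = (\<lambda>i\<in>Ph. sm (c i + y i))" for y :: "rv_index \<Rightarrow> real"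
  define F where "F y = log b (1 + (cmod (\<Sum>l\<in>S. cis (t l + y (IPhi l k))))\<^sup>2 * P)" for y
  define F0 where "F0 y = log b (1 + (cmod (\<Sum>l\<in>S. cis (y (IPhi l k))))\<^sup>2 * P)" for y
  have compI: "l \<in> S \<Longrightarrow> (\<lambda>y. y (IPhi l k)) \<in> borel_measurable Q" for l
  proof -
    assume "l \<in> S"
    then have "(\<lambda>y. y (IPhi l k)) \<in> measurable Q unif_2pi"
      unfolding Q_def using inPh by (intro measurable_component_singleton) auto
    then show ?thesis using measurable_cong_sets[OF refl sets_U, of Q] by simp
  qed
  have sm_m[measurable]: "(\<lambda>y. \<Sum>l\<in>S. cis (t l + y (IPhi l k))) \<in> borel_measurable Q"
    by (intro borel_measurable_sum measurable_compose[OF _ cis_meas] borel_measurable_add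
        borel_measurable_const compI) auto
  have Fm: "F \<in> borel_measurable Q" unfolding F_def by measurable
  have Tm: "T \<in> measurable Q Q" unfolding T_def Q_def
    by (intro measurable_restrict) measurable
  have "integral\<^sup>L Q F = integral\<^sup>L (distr Q Q T) F"
    using PiM_shift[OF finPh, of c] by (simp add: Q_def T_def[abs_def])
  also have "\<dots> = (\<integral>y. F (T y) \<partial>Q)"
    by (rule integral_distr[OF Tm Fm])
  also have "\<dots> = (\<integral>y. F0 y \<partial>Q)"
  proof (intro Bochner_Integration.integral_cong refl)
    fix y
    have "cis (t l + T y (IPhi l k)) = cis (y (IPhi l k))" if "l \<in> S" for l
    proof -
      have "cis (t l + T y (IPhi l k)) = cis (t l) * cis (sm (- t l + y (IPhi l k)))"
        using inPh[OF that] by (simp add: T_def c_def cis_mult)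
      also have "\<dots> = cis (t l + (- t l + y (IPhi l k)))" by (simp add: cis_sm cis_mult)
      finally show ?thesis by simp
    qed
    then show "F (T y) = F0 y" unfolding F_def F0_def
      by (simp cong: sum.cong)
  qed
  finally have eq1: "integral\<^sup>L Q F = (\<integral>y. F0 y \<partial>Q)" .
  obtain e where e: "bij_betw e {1..card S} S" using ex_bij_betw_nat_finite_1[OF finS] by (elim exE)
  define R where "R y = (\<lambda>j\<in>{1..card S}. y (IPhi (e j) k))" for y :: "rv_index \<Rightarrow> real"
  define G where "G w = log b (1 + (cmod (\<Sum>l=1..card S. cis (w l)))\<^sup>2 * P)" for w :: "nat \<Rightarrow> real"
  have inj: "inj_on (\<lambda>j. IPhi (e j) k) {1..card S}"
  proof (rule inj_onI)
    fix x y assume "x \<in> {1..card S}" "y \<in> {1..card S}" "IPhi (e x) k = IPhi (e y) k"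
    then show "x = y" using bij_betw_imp_inj_on[OF e] by (auto dest: inj_onD)
  qed
  have into: "(\<lambda>j. IPhi (e j) k) \<in> {1..card S} \<rightarrow> Ph"
    using bij_betw_imp_surj_on[OF e] inPh by auto
  have dR: "distr Q (PiM {1..card S} (\<lambda>_. unif_2pi)) R = PiM {1..card S} (\<lambda>_. unif_2pi)"
    unfolding Q_def R_def
    using distr_PiM_reindex[of Ph "\<lambda>_. unif_2pi", OF U_prob inj into] by simp
  have Rm: "R \<in> measurable Q (PiM {1..card S} (\<lambda>_. unif_2pi))"
    unfolding R_def Q_def using into
    by (intro measurable_restrict measurable_component_singleton) auto
  have Gm: "G \<in> borel_measurable (PiM {1..card S} (\<lambda>_. unif_2pi))" unfolding G_def by measurable
  have "Rbar b P (card S) = integral\<^sup>L (PiM {1..card S} (\<lambda>_. unif_2pi)) G"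
    by (simp add: Rbar_def G_def[abs_def])
  also have "\<dots> = integral\<^sup>L (distr Q (PiM {1..card S} (\<lambda>_. unif_2pi)) R) G"
    by (simp only: dR)
  also have "\<dots> = (\<integral>y. G (R y) \<partial>Q)"
    by (rule integral_distr[OF Rm Gm])
  also have "\<dots> = (\<integral>y. F0 y \<partial>Q)"
  proof (intro Bochner_Integration.integral_cong refl)
    fix y
    have "(\<Sum>j=1..card S. cis (R y j)) = (\<Sum>j=1..card S. cis (y (IPhi (e j) k)))"
      by (intro sum.cong) (auto simp: R_def)
    also have "\<dots> = (\<Sum>l\<in>S. cis (y (IPhi l k)))"
      by (rule sum.reindex_bij_betw[OF e])
    finally show "G (R y) = F0 y" by (simp add: G_def F0_def)
  qed
  finally show ?thesis using eq1 by (simp add: F_def[abs_def] Q_def Ph_def)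
qed

definition bz :: "(rv_index \<Rightarrow> real) \<Rightarrow> nat \<Rightarrow> real" where
  "bz z l = (if z (IBeta l) = 1 then 1 else 0)"

definition Fk :: "real \<Rightarrow> real \<Rightarrow> nat \<Rightarrow> nat \<Rightarrow> (rv_index \<Rightarrow> real) \<Rightarrow> real" where
  "Fk b P L k z = log b (1 + (cmod (\<Sum>l=1..L. complex_of_real (bz z l) * cis (z (ITheta l) + z (IPhi l k))))\<^sup>2 * P)"

definition Sz :: "nat \<Rightarrow> (rv_index \<Rightarrow> real) \<Rightarrow> nat set" where
  "Sz L z = {l\<in>{1..L}. z (IBeta l) = 1}"

definition Gz :: "real \<Rightarrow> real \<Rightarrow> nat \<Rightarrow> (rv_index \<Rightarrow> real) \<Rightarrow> real" where
  "Gz b P L z = Rbar b P (card (Sz L z))"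

definition Bnd :: "real \<Rightarrow> real \<Rightarrow> nat \<Rightarrow> real" where
  "Bnd b P L = \<bar>log b (1 + (real L)\<^sup>2 * P)\<bar>"

lemma log_bound:
  assumes "1 \<le> x" "x \<le> y" "b > 0" "b \<noteq> 1"
  shows "\<bar>log b x\<bar> \<le> \<bar>log b y\<bar>"
proof -
  have "0 \<le> ln x" "ln x \<le> ln y" using assms by auto
  then have "\<bar>ln x\<bar> \<le> \<bar>ln y\<bar>" by simp
  then show ?thesis unfolding log_def by (simp add: abs_divide divide_right_mono)
qed

lemma norm_sum_cis_le:
  fixes c :: "nat \<Rightarrow> real" and a :: "nat \<Rightarrow> real"
  assumes "\<And>l. \<bar>c l\<bar> \<le> 1"
  shows "cmod (\<Sum>l\<in>A. complex_of_real (c l) * cis (a l)) \<le> real (card A)"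
proof -
  have "cmod (\<Sum>l\<in>A. complex_of_real (c l) * cis (a l)) \<le> (\<Sum>l\<in>A. cmod (complex_of_real (c l) * cis (a l)))"
    by (rule norm_sum)
  also have "\<dots> \<le> (\<Sum>l\<in>A. 1)"
    by (intro sum_mono) (simp add: norm_mult assms)
  finally show ?thesis by simp
qed

lemma bound_gen:
  assumes "P \<ge> 0" "b > 0" "b \<noteq> 1" "0 \<le> r" "r \<le> real L"
  shows "\<bar>log b (1 + r\<^sup>2 * P)\<bar> \<le> Bnd b P L"
  unfolding Bnd_def
proof (rule log_bound)
  show "1 \<le> 1 + r\<^sup>2 * P" using assms by simp
  have "r\<^sup>2 \<le> (real L)\<^sup>2" using assms by (intro power_mono) auto
  then show "1 + r\<^sup>2 * P \<le> 1 + (real L)\<^sup>2 * P" using assms by (simp add: mult_right_mono)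
qed (use assms in auto)

lemma Fk_bound:
  assumes "P \<ge> 0" "b > 0" "b \<noteq> 1"
  shows "\<bar>Fk b P L k z\<bar> \<le> Bnd b P L"
  unfolding Fk_def
  by (rule bound_gen) (use assms norm_sum_cis_le[of "bz z" "\<lambda>l. z (ITheta l) + z (IPhi l k)" "{1..L}"] in \<open>auto simp: bz_def\<close>)

lemma Rbar_bound:
  assumes "P \<ge> 0" "b > 0" "b \<noteq> 1" "i \<le> L"
  shows "\<bar>Rbar b P i\<bar> \<le> Bnd b P L"
proof -
  interpret Q: prob_space "PiM {1..i} (\<lambda>_. unif_2pi)"
    by (intro prob_space_PiM U_prob)
  have c: "cmod (\<Sum>l=1..i. cis (v l)) \<le> real L" for v
  proof -
    have "cmod (\<Sum>l=1..i. cis (v l)) \<le> (\<Sum>l=1..i. cmod (cis (v l)))" by (rule norm_sum)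
    also have "\<dots> = real i" by simp
    finally show ?thesis using assms by linarith
  qed
  have pw: "\<bar>log b (1 + (cmod (\<Sum>l=1..i. cis (v l)))\<^sup>2 * P)\<bar> \<le> Bnd b P L" for v
    by (rule bound_gen) (use assms c in auto)
  have "\<bar>Rbar b P i\<bar> \<le> (\<integral>v. \<bar>log b (1 + (cmod (\<Sum>l=1..i. cis (v l)))\<^sup>2 * P)\<bar> \<partial>PiM {1..i} (\<lambda>_. unif_2pi))"
    unfolding Rbar_def by (rule integral_abs_bound)
  also have "\<dots> \<le> (\<integral>v. Bnd b P L \<partial>PiM {1..i} (\<lambda>_. unif_2pi))"
  proof (rule integral_mono)
    show "integrable (PiM {1..i} (\<lambda>_. unif_2pi)) (\<lambda>v. \<bar>log b (1 + (cmod (\<Sum>l=1..i. cis (v l)))\<^sup>2 * P)\<bar>)"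
      by (rule Q.integrable_const_bound[where B="Bnd b P L"]) (use pw in auto)
    show "integrable (PiM {1..i} (\<lambda>_. unif_2pi)) (\<lambda>v. Bnd b P L)" by (rule Q.integrable_const)
  qed (use pw in auto)
  also have "\<dots> = Bnd b P L" using Q.prob_space by (simp only: lebesgue_integral_const) simp
  finally show ?thesis .
qed

lemma card_Sz: "card (Sz L z) \<le> L"
  unfolding Sz_def by (rule order.trans[OF card_mono[of "{1..L}"]]) auto

lemma Gz_bound:
  assumes "P \<ge> 0" "b > 0" "b \<noteq> 1"
  shows "\<bar>Gz b P L z\<bar> \<le> Bnd b P L"
  unfolding Gz_def by (rule Rbar_bound) (use assms card_Sz in auto)

definition Ph :: "nat \<Rightarrow> nat \<Rightarrow> rv_index set" where
  "Ph L k = (\<lambda>l. IPhi l k) ` {1..L}"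

lemma comp_meas:
  assumes setsN: "\<And>i. sets (N i) = sets borel" and "i \<in> J"
  shows "(\<lambda>z. z i) \<in> borel_measurable (PiM J N)"
proof -
  have "(\<lambda>z. z i) \<in> measurable (PiM J N) (N i)" using assms(2) by (rule measurable_component_singleton)
  then show ?thesis using measurable_cong_sets[OF refl setsN[of i], of "PiM J N"] by simp
qed

lemma Fk_meas:
  assumes setsN: "\<And>i. sets (N i) = sets borel"
    and J: "IBeta ` {1..L} \<subseteq> J" "ITheta ` {1..L} \<subseteq> J" "Ph L k \<subseteq> J"
  shows "Fk b P L k \<in> borel_measurable (PiM J N)"
proof -
  have [measurable]: "l \<in> {1..L} \<Longrightarrow> (\<lambda>z. z (IBeta l)) \<in> borel_measurable (PiM J N)"
     "l \<in> {1..L} \<Longrightarrow> (\<lambda>z. z (ITheta l)) \<in> borel_measurable (PiM J N)"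
     "l \<in> {1..L} \<Longrightarrow> (\<lambda>z. z (IPhi l k)) \<in> borel_measurable (PiM J N)" for l
    using J by (auto intro!: comp_meas[OF setsN] simp: Ph_def)
  have [measurable]: "(\<lambda>z. \<Sum>l=1..L. complex_of_real (bz z l) * cis (z (ITheta l) + z (IPhi l k)))
      \<in> borel_measurable (PiM J N)"
    unfolding bz_def by measurable
  show ?thesis unfolding Fk_def[abs_def] by measurable
qed

lemma Gz_alt:
  "Gz b P L z = (\<Sum>S\<in>Pow {1..L}. if (\<forall>l\<in>{1..L}. (z (IBeta l) = 1) = (l \<in> S)) then Rbar b P (card S) else 0)"
proof -
  have "(\<Sum>S\<in>Pow {1..L}. if (\<forall>l\<in>{1..L}. (z (IBeta l) = 1) = (l \<in> S)) then Rbar b P (card S) else 0)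
      = (\<Sum>S\<in>Pow {1..L}. if Sz L z = S then Rbar b P (card S) else 0)"
    by (intro sum.cong refl) (auto simp: Sz_def)
  also have "\<dots> = Rbar b P (card (Sz L z))"
    by (subst sum.delta') (auto simp: Sz_def)
  finally show ?thesis by (simp add: Gz_def)
qed

lemma Gz_meas:
  assumes setsN: "\<And>i. sets (N i) = sets borel"
    and J: "IBeta ` {1..L} \<subseteq> J"
  shows "Gz b P L \<in> borel_measurable (PiM J N)"
proof -
  have [measurable]: "l \<in> {1..L} \<Longrightarrow> (\<lambda>z. z (IBeta l)) \<in> borel_measurable (PiM J N)" for l
    using J by (auto intro!: comp_meas[OF setsN])
  show ?thesis unfolding Gz_alt[abs_def] by measurable
qed

lemma cross_zero:
  fixes N :: "rv_index \<Rightarrow> real measure" and W :: "(rv_index \<Rightarrow> real) \<Rightarrow> real"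
  assumes probN: "\<And>i. prob_space (N i)" and setsN: "\<And>i. sets (N i) = sets borel"
    and NU: "\<And>i. i \<in> Ph L k \<Longrightarrow> N i = unif_2pi"
    and finJ: "finite J" and J: "IBeta ` {1..L} \<subseteq> J" "ITheta ` {1..L} \<subseteq> J" "Ph L k \<subseteq> J"
    and Wm: "W \<in> borel_measurable (PiM J N)" and Wb: "\<And>z. \<bar>W z\<bar> \<le> C"
    and Wmerge: "\<And>x y. W (merge (J - Ph L k) (Ph L k) (x, y)) = W x"
    and Pb: "P \<ge> 0" "b > 0" "b \<noteq> 1"
  shows "(\<integral>z. W z * (Fk b P L k z - Gz b P L z) \<partial>PiM J N) = 0"
proof -
  interpret product_prob_space N by (intro product_prob_spaceI probN)
  define A where "A = J - Ph L k"
  define B where "B = Ph L k"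
  have AB: "A \<inter> B = {}" "J = A \<union> B" using J by (auto simp: A_def B_def)
  have finA: "finite A" "finite B" using finJ AB by auto
  have inA: "IBeta l \<in> A" "ITheta l \<in> A" if "l \<in> {1..L}" for l
    using J that by (auto simp: A_def Ph_def)
  have notA: "IPhi l k \<notin> A" "IPhi l k \<in> B" if "l \<in> {1..L}" for l
    using that by (auto simp: A_def B_def Ph_def)
  define H where "H z = W z * (Fk b P L k z - Gz b P L z)" for z
  have Hm: "H \<in> borel_measurable (PiM J N)" unfolding H_def
    using Wm Fk_meas[OF setsN J] Gz_meas[OF setsN J(1)] by measurable
  have Hb: "\<bar>H z\<bar> \<le> \<bar>C\<bar> * (2 * Bnd b P L)" for z
  proof -
    have "\<bar>Fk b P L k z - Gz b P L z\<bar> \<le> 2 * Bnd b P L"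
      using Fk_bound[OF Pb, of L k z] Gz_bound[OF Pb, of L z] by linarith
    moreover have "\<bar>W z\<bar> \<le> \<bar>C\<bar>" using Wb[of z] by linarith
    ultimately show ?thesis unfolding H_def abs_mult by (intro mult_mono) auto
  qed
  interpret PJ: prob_space "PiM J N" by (intro prob_space_PiM probN)
  have "integrable (PiM J N) H"
    by (rule PJ.integrable_const_bound[where B="\<bar>C\<bar> * (2 * Bnd b P L)"]) (use Hm Hb in auto)
  then have Hint: "integrable (PiM (A \<union> B) N) H" using AB(2) by simp
  have "(\<integral>z. H z \<partial>PiM J N) = (\<integral>x. (\<integral>y. H (merge A B (x, y)) \<partial>PiM B N) \<partial>PiM A N)"
    using product_integral_fold[OF AB(1) finA Hint] AB by simp
  also have "\<dots> = (\<integral>x. 0 \<partial>PiM A N)"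
  proof (intro Bochner_Integration.integral_cong refl)
    fix x
    define f where "f y = log b (1 + (cmod (\<Sum>l\<in>Sz L x. cis (x (ITheta l) + y (IPhi l k))))\<^sup>2 * P)" for y
    have Gm: "Gz b P L (merge A B (x, y)) = Gz b P L x" for y
      unfolding Gz_def Sz_def using inA AB by (intro arg_cong[where f="\<lambda>S. Rbar b P (card S)"]) auto
    have Fm: "Fk b P L k (merge A B (x, y)) = f y" for y
    proof -
      have "(\<Sum>l=1..L. complex_of_real (bz (merge A B (x, y)) l) * cis (merge A B (x, y) (ITheta l) + merge A B (x, y) (IPhi l k)))
          = (\<Sum>l=1..L. if l \<in> Sz L x then cis (x (ITheta l) + y (IPhi l k)) else 0)"
        using inA notA AB by (intro sum.cong refl) (auto simp: bz_def Sz_def)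
      also have "\<dots> = (\<Sum>l\<in>Sz L x. cis (x (ITheta l) + y (IPhi l k)))"
        by (subst sum.inter_filter[symmetric]) (auto simp: Sz_def intro!: sum.cong)
      finally show ?thesis unfolding Fk_def f_def by simp
    qed
    have Wm': "W (merge A B (x, y)) = W x" for y using Wmerge[of x y] by (simp add: A_def B_def)
    have PB: "PiM B N = PiM (Ph L k) (\<lambda>_. unif_2pi)"
      unfolding B_def by (intro PiM_cong refl NU)
    interpret PBp: prob_space "PiM B N" by (intro prob_space_PiM probN)
    have fm: "f \<in> borel_measurable (PiM B N)"
    proof -
      have [measurable]: "l \<in> Sz L x \<Longrightarrow> (\<lambda>y. y (IPhi l k)) \<in> borel_measurable (PiM B N)" for l
        using notA by (auto intro!: comp_meas[OF setsN] simp: Sz_def)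
      have [measurable]: "(\<lambda>y. \<Sum>l\<in>Sz L x. cis (x (ITheta l) + y (IPhi l k))) \<in> borel_measurable (PiM B N)"
        by measurable
      show ?thesis unfolding f_def[abs_def] by measurable
    qed
    have fb: "\<bar>f y\<bar> \<le> Bnd b P L" for y
      using Fm[of y] Fk_bound[OF Pb, of L k "merge A B (x, y)"] by simp
    have fint: "integrable (PiM B N) f"
      by (rule PBp.integrable_const_bound[where B="Bnd b P L"]) (use fm fb in auto)
    have "(\<integral>y. f y \<partial>PiM B N) = Rbar b P (card (Sz L x))"
      unfolding PB f_def Ph_def by (rule inner_integral[where t="\<lambda>l. x (ITheta l)"]) (auto simp: Sz_def)
    then have fI: "(\<integral>y. f y \<partial>PiM B N) = Gz b P L x" by (simp add: Gz_def)
    have "(\<integral>y. H (merge A B (x, y)) \<partial>PiM B N) = (\<integral>y. W x * (f y - Gz b P L x) \<partial>PiM B N)"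
      unfolding H_def by (simp add: Gm Fm Wm')
    also have "\<dots> = W x * ((\<integral>y. f y \<partial>PiM B N) - Gz b P L x)"
      using fint by (simp add: PBp.prob_space)
    also have "\<dots> = 0" by (simp add: fI)
    finally show "(\<integral>y. H (merge A B (x, y)) \<partial>PiM B N) = 0" .
  qed
  also have "\<dots> = 0" by simp
  finally show ?thesis by (simp add: H_def)
qed

definition JK :: "nat \<Rightarrow> nat \<Rightarrow> rv_index set" where
  "JK L K = IBeta ` {1..L} \<union> ITheta ` {1..L} \<union> (\<Union>k\<in>{1..K}. Ph L k)"

lemma merge_A: "i \<in> A \<Longrightarrow> merge A B (x, y) i = x i"
  by (simp add: merge_def)

lemma Fk_merge:
  assumes "IBeta ` {1..L} \<subseteq> A" "ITheta ` {1..L} \<subseteq> A" "Ph L k' \<subseteq> A"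
  shows "Fk b P L k' (merge A B (x, y)) = Fk b P L k' x"
proof -
  have "(\<Sum>l=1..L. complex_of_real (bz (merge A B (x, y)) l) * cis (merge A B (x, y) (ITheta l) + merge A B (x, y) (IPhi l k')))
      = (\<Sum>l=1..L. complex_of_real (bz x l) * cis (x (ITheta l) + x (IPhi l k')))"
  proof (intro sum.cong refl)
    fix l assume l: "l \<in> {1..L}"
    then have "IBeta l \<in> A" "ITheta l \<in> A" "IPhi l k' \<in> A" using assms by (auto simp: Ph_def)
    then show "complex_of_real (bz (merge A B (x, y)) l) * cis (merge A B (x, y) (ITheta l) + merge A B (x, y) (IPhi l k'))
      = complex_of_real (bz x l) * cis (x (ITheta l) + x (IPhi l k'))"
      by (simp add: bz_def merge_A)
  qed
  then show ?thesis by (simp add: Fk_def)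
qed

lemma Gz_merge:
  assumes "IBeta ` {1..L} \<subseteq> A"
  shows "Gz b P L (merge A B (x, y)) = Gz b P L x"
proof -
  have m: "l \<in> {1..L} \<Longrightarrow> merge A B (x, y) (IBeta l) = x (IBeta l)" for l
    using assms by (intro merge_A) auto
  have "Sz L (merge A B (x, y)) = Sz L x" unfolding Sz_def using m by auto
  then show ?thesis by (simp add: Gz_def)
qed

lemma cheb_prod:
  fixes N :: "rv_index \<Rightarrow> real measure"
  assumes probN: "\<And>i. prob_space (N i)" and setsN: "\<And>i. sets (N i) = sets borel"
    and NU: "\<And>i k. k \<in> {1..K} \<Longrightarrow> i \<in> Ph L k \<Longrightarrow> N i = unif_2pi"
    and K: "K \<ge> 1" and eps: "\<epsilon> > 0"
    and Pb: "P \<ge> 0" "b > 0" "b \<noteq> 1"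
  shows "measure (PiM (JK L K) N) {z \<in> space (PiM (JK L K) N).
            \<bar>(1 / real K) * (\<Sum>k=1..K. Fk b P L k z) - Gz b P L z\<bar> \<ge> \<epsilon>}
         \<le> 4 * (Bnd b P L)\<^sup>2 / (real K * \<epsilon>\<^sup>2)"
proof -
  define J where "J = JK L K"
  define Q where "Q = PiM J N"
  define B where "B = Bnd b P L"
  interpret Q: prob_space Q unfolding Q_def by (intro prob_space_PiM probN)
  have finJ: "finite J" by (simp add: J_def JK_def Ph_def)
  have Jsub: "IBeta ` {1..L} \<subseteq> J" "ITheta ` {1..L} \<subseteq> J" "k \<in> {1..K} \<Longrightarrow> Ph L k \<subseteq> J" for k
    by (auto simp: J_def JK_def)
  define Y where "Y k z = Fk b P L k z - Gz b P L z" for k z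
  have Ym: "k \<in> {1..K} \<Longrightarrow> Y k \<in> borel_measurable Q" for k
    unfolding Y_def[abs_def] Q_def
    using Fk_meas[OF setsN Jsub(1,2) Jsub(3)] Gz_meas[OF setsN Jsub(1)] by measurable
  have Yb: "\<bar>Y k z\<bar> \<le> 2 * B" for k z
    using Fk_bound[OF Pb, of L k z] Gz_bound[OF Pb, of L z] unfolding Y_def B_def by linarith
  have B0: "0 \<le> B" unfolding B_def Bnd_def by simp
  have YYb: "\<bar>Y k z * Y k' z\<bar> \<le> 4 * B\<^sup>2" for k k' z
  proof -
    have "\<bar>Y k z * Y k' z\<bar> \<le> (2*B) * (2*B)" unfolding abs_mult
      by (intro mult_mono Yb) (auto simp: B0)
    then show ?thesis by (simp add: power2_eq_square)
  qed
  have YYi: "k \<in> {1..K} \<Longrightarrow> k' \<in> {1..K} \<Longrightarrow> integrable Q (\<lambda>z. Y k z * Y k' z)" for k k'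
    by (rule Q.integrable_const_bound[where B="4 * B\<^sup>2"]) (use YYb Ym in auto)
  have cross: "(\<integral>z. Y k z * Y k' z \<partial>Q) = 0"
    if k: "k \<in> {1..K}" "k' \<in> {1..K}" "k \<noteq> k'" for k k'
  proof -
    have "(\<integral>z. Y k' z * (Fk b P L k z - Gz b P L z) \<partial>PiM J N) = 0"
    proof (rule cross_zero[OF probN setsN _ finJ Jsub(1,2) Jsub(3)[OF k(1)], where C="2*B"])
      show "\<And>i. i \<in> Ph L k \<Longrightarrow> N i = unif_2pi" using NU k(1) by blast
      show "Y k' \<in> borel_measurable (PiM J N)" using Ym[OF k(2)] by (simp add: Q_def)
      show "\<And>z. \<bar>Y k' z\<bar> \<le> 2 * B" by (rule Yb)
      have sub: "IBeta ` {1..L} \<subseteq> J - Ph L k" "ITheta ` {1..L} \<subseteq> J - Ph L k" "Ph L k' \<subseteq> J - Ph L k"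
        using Jsub(1,2) Jsub(3)[OF k(2)] k by (auto simp: Ph_def)
      show "\<And>x y. Y k' (merge (J - Ph L k) (Ph L k) (x, y)) = Y k' x"
        unfolding Y_def using Fk_merge[OF sub] Gz_merge[OF sub(1)] by simp
    qed (use Pb in auto)
    then show ?thesis by (simp add: Y_def Q_def mult.commute)
  qed
  define D where "D z = (\<Sum>k=1..K. Y k z)" for z
  have Dm: "D \<in> borel_measurable Q" unfolding D_def[abs_def] using Ym by measurable
  have D2: "(D z)\<^sup>2 = (\<Sum>k=1..K. \<Sum>k'=1..K. Y k z * Y k' z)" for z
    unfolding D_def power2_eq_square by (simp add: sum_product)
  have D2i: "integrable Q (\<lambda>z. (D z)\<^sup>2)"
    unfolding D2 using YYi by (intro Bochner_Integration.integrable_sum) auto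
  have "(\<integral>z. (D z)\<^sup>2 \<partial>Q) = (\<Sum>k=1..K. \<integral>z. (\<Sum>k'=1..K. Y k z * Y k' z) \<partial>Q)"
    unfolding D2 by (rule Bochner_Integration.integral_sum) (use YYi in \<open>auto intro!: Bochner_Integration.integrable_sum\<close>)
  also have "\<dots> = (\<Sum>k=1..K. \<Sum>k'=1..K. \<integral>z. Y k z * Y k' z \<partial>Q)"
    by (intro sum.cong refl Bochner_Integration.integral_sum) (use YYi in auto)
  also have "\<dots> = (\<Sum>k=1..K. \<integral>z. Y k z * Y k z \<partial>Q)"
  proof (intro sum.cong refl)
    fix k assume k: "k \<in> {1..K}"
    have "(\<Sum>k'=1..K. \<integral>z. Y k z * Y k' z \<partial>Q) = (\<Sum>k'=1..K. if k' = k then \<integral>z. Y k z * Y k z \<partial>Q else 0)"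
      using cross k by (intro sum.cong refl) auto
    also have "\<dots> = (\<integral>z. Y k z * Y k z \<partial>Q)" using k by simp
    finally show "(\<Sum>k'=1..K. \<integral>z. Y k z * Y k' z \<partial>Q) = (\<integral>z. Y k z * Y k z \<partial>Q)" .
  qed
  also have "\<dots> \<le> (\<Sum>k=1..K. 4 * B\<^sup>2)"
  proof (intro sum_mono)
    fix k assume k: "k \<in> {1..K}"
    show "(\<integral>z. Y k z * Y k z \<partial>Q) \<le> 4 * B\<^sup>2"
      by (rule Q.integral_le_const[OF YYi[OF k k]]) (use abs_le_D1[OF YYb] in auto)
  qed
  also have "\<dots> = real K * (4 * B\<^sup>2)" by simp
  finally have ED2: "(\<integral>z. (D z)\<^sup>2 \<partial>Q) \<le> real K * (4 * B\<^sup>2)" .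
  have Kpos: "real K > 0" using K by simp
  have sub: "{z \<in> space Q. \<bar>(1 / real K) * (\<Sum>k=1..K. Fk b P L k z) - Gz b P L z\<bar> \<ge> \<epsilon>}
      \<subseteq> {z \<in> space Q. (D z)\<^sup>2 \<ge> (real K * \<epsilon>)\<^sup>2}"
  proof safe
    fix z assume z: "z \<in> space Q" and ge: "\<epsilon> \<le> \<bar>(1 / real K) * (\<Sum>k=1..K. Fk b P L k z) - Gz b P L z\<bar>"
    have "D z = (\<Sum>k=1..K. Fk b P L k z) - real K * Gz b P L z"
      unfolding D_def Y_def by (simp add: sum_subtractf)
    then have "(1 / real K) * (\<Sum>k=1..K. Fk b P L k z) - Gz b P L z = D z / real K"
      using Kpos by (simp add: field_simps)
    with ge have "\<epsilon> \<le> \<bar>D z\<bar> / real K" by simp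
    then have "real K * \<epsilon> \<le> \<bar>D z\<bar>" using Kpos by (simp add: field_simps)
    then have "(real K * \<epsilon>)\<^sup>2 \<le> \<bar>D z\<bar>\<^sup>2" using eps Kpos by (intro power_mono) auto
    then show "(real K * \<epsilon>)\<^sup>2 \<le> (D z)\<^sup>2" by simp
  qed
  have "measure Q {z \<in> space Q. \<bar>(1 / real K) * (\<Sum>k=1..K. Fk b P L k z) - Gz b P L z\<bar> \<ge> \<epsilon>}
      \<le> measure Q {z \<in> space Q. (D z)\<^sup>2 \<ge> (real K * \<epsilon>)\<^sup>2}"
    by (rule Q.finite_measure_mono[OF sub]) (use Dm in measurable)
  also have "\<dots> \<le> (\<integral>z. (D z)\<^sup>2 \<partial>Q) / (real K * \<epsilon>)\<^sup>2"
    by (rule integral_Markov_inequality_measure[OF D2i, where A="space Q"]) (use eps Kpos in auto)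
  also have "\<dots> \<le> real K * (4 * B\<^sup>2) / (real K * \<epsilon>)\<^sup>2"
    by (rule divide_right_mono[OF ED2]) simp
  also have "\<dots> = 4 * B\<^sup>2 / (real K * \<epsilon>\<^sup>2)"
    using Kpos by (simp add: power2_eq_square field_simps)
  finally show ?thesis by (simp add: Q_def J_def B_def)
qed

theorem proposition5:
  fixes M :: "'a measure"
    and L :: nat and P pB b \<epsilon> :: real
    and \<beta> :: "nat \<Rightarrow> 'a \<Rightarrow> nat"
    and \<theta> :: "nat \<Rightarrow> 'a \<Rightarrow> real"
    and \<phi> :: "nat \<Rightarrow> nat \<Rightarrow> 'a \<Rightarrow> real"
  assumes "prob_space M"
    and "L \<ge> 1" and "P \<ge> 0" and "0 \<le> pB" and "pB \<le> 1"
    and "b > 0" and "b \<noteq> 1"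
    and beta_rv: "\<And>l. l \<in> {1..L} \<Longrightarrow> \<beta> l \<in> measurable M (count_space UNIV)"
    and beta0: "\<And>l. l \<in> {1..L} \<Longrightarrow> measure M {x \<in> space M. \<beta> l x = 0} = pB"
    and beta1: "\<And>l. l \<in> {1..L} \<Longrightarrow> measure M {x \<in> space M. \<beta> l x = 1} = 1 - pB"
    and theta_unif: "\<And>l. l \<in> {1..L} \<Longrightarrow> \<theta> l \<in> borel_measurable M \<and> distr M lborel (\<theta> l) = unif_2pi"
    and phi_unif: "\<And>l k. l \<in> {1..L} \<Longrightarrow> k \<ge> 1 \<Longrightarrow>
                      \<phi> l k \<in> borel_measurable M \<and> distr M lborel (\<phi> l k) = unif_2pi"
    and indep: "prob_space.indep_vars M (\<lambda>_. borel)
        (\<lambda>i. case i of IBeta l \<Rightarrow> (\<lambda>x. real (\<beta> l x)) | ITheta l \<Rightarrow> \<theta> l | IPhi l k \<Rightarrow> \<phi> l k)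
        (IBeta ` {1..L} \<union> ITheta ` {1..L} \<union> {IPhi l k | l k. l \<in> {1..L} \<and> k \<ge> 1})"
    and "\<epsilon> > 0"
  shows "(\<lambda>K::nat. measure M {x \<in> space M.
            \<bar>(1 / real K) * (\<Sum>k=1..K. log b (1 + (cmod (\<Sum>l=1..L. of_nat (\<beta> l x) * cis (\<theta> l x + \<phi> l k x)))\<^sup>2 * P))
              - Rbar b P (\<Sum>l=1..L. \<beta> l x)\<bar> \<ge> \<epsilon>}) \<longlonglongrightarrow> 0"
proof -
  interpret prob_space M by fact
  define X where "X = (\<lambda>i. case i of IBeta l \<Rightarrow> (\<lambda>x. real (\<beta> l x)) | ITheta l \<Rightarrow> \<theta> l | IPhi l k \<Rightarrow> \<phi> l k)"
  define Iall where "Iall = IBeta ` {1..L} \<union> ITheta ` {1..L} \<union> {IPhi l k | l k. l \<in> {1..L} \<and> k \<ge> 1}"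
  have ind: "indep_vars (\<lambda>_. borel) X Iall" using indep unfolding X_def Iall_def .
  have bm: "l \<in> {1..L} \<Longrightarrow> (\<lambda>x. real (\<beta> l x)) \<in> borel_measurable M" for l
    by (rule measurable_compose[OF beta_rv]) simp_all
  have Xm: "X i \<in> borel_measurable M" if "i \<in> Iall" for i
    using that bm theta_unif phi_unif by (auto simp: Iall_def X_def)
  have bl: "f \<in> borel_measurable M \<Longrightarrow> distr M borel f = distr M lborel f" for f
    by (rule distr_cong) auto
  define N where "N i = (if i \<in> Iall then distr M borel (X i) else unif_2pi)" for i
  have probN: "prob_space (N i)" for i
    using Xm[of i] by (auto simp: N_def intro: prob_space_distr U_prob)
  have setsN: "sets (N i) = sets borel" for i by (simp add: N_def)
  have NU: "N i = unif_2pi" if kK: "k \<in> {1..K}" and iP: "i \<in> Ph L k" for K k i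
  proof -
    obtain l where l: "l \<in> {1..L}" "i = IPhi l k" using iP unfolding Ph_def by blast
    have k: "k \<ge> 1" using kK by simp
    have "i \<in> Iall" using l k by (auto simp: Iall_def)
    then have "N i = distr M borel (\<phi> l k)" by (simp add: N_def X_def l)
    also have "\<dots> = distr M lborel (\<phi> l k)" using phi_unif[OF l(1) k] by (intro bl) auto
    also have "\<dots> = unif_2pi" using phi_unif[OF l(1) k] by auto
    finally show ?thesis .
  qed
  have AEb: "AE x in M. \<forall>l\<in>{1..L}. \<beta> l x = 0 \<or> \<beta> l x = 1"
  proof (rule AE_finite_allI, simp)
    fix l assume l: "l \<in> {1..L}"
    have s0: "{x \<in> space M. \<beta> l x = 0} \<in> events" and s1: "{x \<in> space M. \<beta> l x = 1} \<in> events"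
      using measurable_sets[OF beta_rv[OF l], of "{0}"] measurable_sets[OF beta_rv[OF l], of "{1}"]
      by (auto simp: vimage_def Int_def conj_commute)
    have "prob ({x \<in> space M. \<beta> l x = 0} \<union> {x \<in> space M. \<beta> l x = 1}) = 1"
    proof -
      have disj: "{x \<in> space M. \<beta> l x = 0} \<inter> {x \<in> space M. \<beta> l x = 1} = {}" by auto
      show ?thesis using finite_measure_Union[OF s0 s1 disj] beta0[OF l] beta1[OF l] by simp
    qed
    also have "{x \<in> space M. \<beta> l x = 0} \<union> {x \<in> space M. \<beta> l x = 1} = {x \<in> space M. \<beta> l x = 0 \<or> \<beta> l x = 1}"
      by auto
    finally have "AE x in M. x \<in> {x \<in> space M. \<beta> l x = 0 \<or> \<beta> l x = 1}" by (rule AE_prob_1)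
    then show "AE x in M. \<beta> l x = 0 \<or> \<beta> l x = 1" by auto
  qed
  define E where "E K = {x \<in> space M.
            \<bar>(1 / real K) * (\<Sum>k=1..K. log b (1 + (cmod (\<Sum>l=1..L. of_nat (\<beta> l x) * cis (\<theta> l x + \<phi> l k x)))\<^sup>2 * P))
              - Rbar b P (\<Sum>l=1..L. \<beta> l x)\<bar> \<ge> \<epsilon>}" for K
  define C where "C = 4 * (Bnd b P L)\<^sup>2 / \<epsilon>\<^sup>2"
  have Pb: "P \<ge> 0" "b > 0" "b \<noteq> 1" by fact+
  have bound: "measure M (E K) \<le> C / real K" if K: "K \<ge> 1" for K
  proof -
    define J where "J = JK L K"
    define Z where "Z x = (\<lambda>i\<in>J. X i x)" for x
    have finJ: "finite J" by (simp add: J_def JK_def Ph_def)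
    have JI: "J \<subseteq> Iall" using K by (auto simp: J_def JK_def Ph_def Iall_def)
    have Jne: "J \<noteq> {}" using \<open>L \<ge> 1\<close> by (auto simp: J_def JK_def)
    have Jsub: "IBeta ` {1..L} \<subseteq> J" "ITheta ` {1..L} \<subseteq> J" "k \<in> {1..K} \<Longrightarrow> Ph L k \<subseteq> J" for k
      by (auto simp: J_def JK_def)
    have Zm: "Z \<in> measurable M (PiM J (\<lambda>_. borel))"
      unfolding Z_def using JI Xm by (intro measurable_restrict) auto
    have "indep_vars (\<lambda>_. borel) X J" by (rule indep_vars_subset[OF ind JI])
    then have "distr M (PiM J (\<lambda>_. borel)) Z = PiM J (\<lambda>i. distr M borel (X i))"
      using indep_vars_iff_distr_eq_PiM'[where I=J and X=X and M'="\<lambda>_. borel"] Jne Xm JI unfolding Z_def by auto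
    also have "\<dots> = PiM J N" using JI by (intro PiM_cong refl) (auto simp: N_def)
    finally have dZ: "distr M (PiM J (\<lambda>_. borel)) Z = PiM J N" .
    define E' where "E' = {z \<in> space (PiM J N). \<bar>(1 / real K) * (\<Sum>k=1..K. Fk b P L k z) - Gz b P L z\<bar> \<ge> \<epsilon>}"
    have [measurable]: "k \<in> {1..K} \<Longrightarrow> Fk b P L k \<in> borel_measurable (PiM J N)" for k
      by (rule Fk_meas[OF setsN Jsub(1,2) Jsub(3)])
    have [measurable]: "Gz b P L \<in> borel_measurable (PiM J N)" by (rule Gz_meas[OF setsN Jsub(1)])
    have E'N: "E' \<in> sets (PiM J N)" unfolding E'_def by measurable
    have sJ: "sets (PiM J N) = sets (PiM J (\<lambda>_. borel))" by (intro sets_PiM_cong refl setsN)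
    have E'B: "E' \<in> sets (PiM J (\<lambda>_. borel))" using E'N sJ by simp
    have mE': "measure (PiM J N) E' \<le> C / real K"
      using cheb_prod[OF probN setsN NU K \<open>\<epsilon> > 0\<close> Pb] K unfolding E'_def J_def C_def
      by (simp add: field_simps)
    have mZ: "measure (PiM J N) E' = measure M (Z -` E' \<inter> space M)"
      using measure_distr[OF Zm E'B] dZ by simp
    show ?thesis
    proof (cases "E K \<in> sets M")
      case False
      then have "measure M (E K) = 0" by (rule measure_notin_sets)
      moreover have "0 \<le> C / real K" by (simp add: C_def)
      ultimately show ?thesis by simp
    next
      case True
      have ZE: "Z -` E' \<inter> space M \<in> sets M" using Zm E'B by measurable
      have "AE x in M. x \<in> E K \<longleftrightarrow> x \<in> Z -` E' \<inter> space M"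
        using AEb
      proof eventually_elim
        case (elim x)
        show ?case
        proof (cases "x \<in> space M")
          case False then show ?thesis by (simp add: E_def)
        next
          case xM: True
          have ZB: "l \<in> {1..L} \<Longrightarrow> Z x (IBeta l) = real (\<beta> l x)" for l
          proof -
            assume "l \<in> {1..L}"
            then have "IBeta l \<in> J" using Jsub(1) by blast
            then show ?thesis by (simp add: Z_def X_def)
          qed
          have ZT: "l \<in> {1..L} \<Longrightarrow> Z x (ITheta l) = \<theta> l x" for l
          proof -
            assume "l \<in> {1..L}"
            then have "ITheta l \<in> J" using Jsub(2) by blast
            then show ?thesis by (simp add: Z_def X_def)
          qed
          have ZP: "l \<in> {1..L} \<Longrightarrow> k \<in> {1..K} \<Longrightarrow> Z x (IPhi l k) = \<phi> l k x" for l k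
          proof -
            assume "l \<in> {1..L}" "k \<in> {1..K}"
            then have "IPhi l k \<in> J" using Jsub(3)[of k] unfolding Ph_def by blast
            then show ?thesis by (simp add: Z_def X_def)
          qed
          have bzZ: "l \<in> {1..L} \<Longrightarrow> bz (Z x) l = real (\<beta> l x)" for l
            using elim[rule_format, of l] ZB[of l] by (auto simp: bz_def)
          have FZ: "Fk b P L k (Z x) = log b (1 + (cmod (\<Sum>l=1..L. of_nat (\<beta> l x) * cis (\<theta> l x + \<phi> l k x)))\<^sup>2 * P)"
            if k: "k \<in> {1..K}" for k
          proof -
            have "(\<Sum>l=1..L. complex_of_real (bz (Z x) l) * cis (Z x (ITheta l) + Z x (IPhi l k)))
                = (\<Sum>l=1..L. of_nat (\<beta> l x) * cis (\<theta> l x + \<phi> l k x))"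
              using bzZ ZT ZP k by (intro sum.cong refl) auto
            then show ?thesis by (simp add: Fk_def)
          qed
          have "card (Sz L (Z x)) = card {l \<in> {1..L}. \<beta> l x = 1}"
            unfolding Sz_def using ZB by (intro arg_cong[where f=card]) auto
          also have "\<dots> = (\<Sum>l\<in>{l \<in> {1..L}. \<beta> l x = 1}. 1)" by simp
          also have "\<dots> = (\<Sum>l=1..L. if \<beta> l x = 1 then 1 else 0)"
            by (subst sum.inter_filter) auto
          also have "\<dots> = (\<Sum>l=1..L. \<beta> l x)"
            using elim by (intro sum.cong refl) auto
          finally have GZ: "Gz b P L (Z x) = Rbar b P (\<Sum>l=1..L. \<beta> l x)" by (simp add: Gz_def)
          have Zsp: "Z x \<in> space (PiM J N)" by (auto simp: Z_def space_PiM setsN sets_eq_imp_space_eq[OF setsN])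
          have sumeq: "(\<Sum>k=1..K. Fk b P L k (Z x)) = (\<Sum>k=1..K. log b (1 + (cmod (\<Sum>l=1..L. of_nat (\<beta> l x) * cis (\<theta> l x + \<phi> l k x)))\<^sup>2 * P))"
            using FZ by (intro sum.cong refl) auto
          show ?thesis
            apply (simp only: E_def E'_def mem_Collect_eq Int_iff vimage_eq sumeq[symmetric] GZ[symmetric])
            using xM Zsp by simp
        qed
      qed
      then have "measure M (E K) = measure M (Z -` E' \<inter> space M)"
        by (rule measure_eq_AE[OF _ True ZE])
      then show ?thesis using mZ mE' by simp
    qed
  qed
  have "(\<lambda>K. measure M (E K)) \<longlonglongrightarrow> 0"
  proof (rule tendsto_sandwich[of "\<lambda>_. 0" _ sequentially "\<lambda>K. C / real K"])
    show "\<forall>\<^sub>F K in sequentially. 0 \<le> measure M (E K)" by simp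
    show "\<forall>\<^sub>F K in sequentially. measure M (E K) \<le> C / real K"
      using eventually_ge_at_top[of 1] by eventually_elim (rule bound)
    show "(\<lambda>_. 0) \<longlonglongrightarrow> (0::real)" by simp
    show "(\<lambda>K. C / real K) \<longlonglongrightarrow> 0" by (rule lim_const_over_n)
  qed
  then show ?thesis unfolding E_def .
qed

end
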